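(* Let $x\in\mathbb{R}$, written as $x=k+\sum_{n=1}^\infty a_n2^{-n}$ with $k\in\mathbb{Z}$ and $a_n\in\{0,1\}$. (1) If $x\in D$, then $\partial^+T(x)=\varnothing$. (2) If $x\notin D$ and there exists an integer $m\ge1$ such that $a_n+a_{n+1}=1$ for all $n\ge m$, then $$\partial^+T(x)=\begin{cases} m-1-2\sum_{j=1}^{m-1}a_j+[0,1] & \text{if } a_m=0,\\ m-1-2\sum_{j=1}^{m-1}a_j+[-1,0] & \text{if } a_m=1.\end{cases}$$ (3) If $x\notin D$ does not satisfy the hypothesis of (2), but there exists $m\ge1$ such that $a_{m+2i}+a_{m+2i+1}=1$ for all $i\ge0$, then $$\partial^+T(x)=\Big\{m-1-2\sum_{j=1}^{m-1}a_j\Big\}.$$ (4) If $x\notin D$ satisfies neither the hypothesis of (2) nor that of (3), then $\partial^+T(x)=\varnothing$.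
   Context: Let $\phi(x)=\operatorname{dist}(x,\mathbb{Z})$ and $T(x)=\sum_{n=0}^\infty 2^{-n}\phi(2^nx)$ be the Takagi function. $D$ denotes the set of dyadic rationals $\{k/2^{j}:k\in\mathbb{Z},j\ge0\}$; for $x\notin D$ the binary expansion is unique. The Fréchet superdifferential of an upper semicontinuous $f:\mathbb{R}\to\mathbb{R}$ at $x$ is $\partial^+f(x)=\{\xi\in\mathbb{R}: \limsup_{h\to0}\frac{f(x+h)-f(x)-\xi h}{|h|}\le0\}$. For $c\in\mathbb{R}$ and an interval $I$, $c+I=\{c+t:t\in I\}$. *)

theory Defs
  imports "HOL-Analysis.Analysis"
begin

definition phi :: "real \<Rightarrow> real" where
  "phi x = infdist x (\<int> :: real set)"

definition takagi :: "real \<Rightarrow> real" where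
  "takagi x = (\<Sum>n. phi (2 ^ n * x) / 2 ^ n)"

definition dyadic :: "real set" where
  "dyadic = {x. \<exists>(k::int) (j::nat). x = of_int k / 2 ^ j}"

definition superdiff :: "(real \<Rightarrow> real) \<Rightarrow> real \<Rightarrow> real set" where
  "superdiff f x = {\<xi>. Limsup (at 0) (\<lambda>h. ereal ((f (x + h) - f x - \<xi> * h) / \<bar>h\<bar>)) \<le> 0}"

end

theory Submission
  imports Defs
begin

lemma phi_formula: "phi x = min (frac x) (1 - frac x)"
proof (rule antisym)
  have "phi x \<le> dist x (of_int \<lfloor>x\<rfloor>)" unfolding phi_def by (rule infdist_le) simp
  moreover have "phi x \<le> dist x (of_int (\<lfloor>x\<rfloor> + 1))" unfolding phi_def by (rule infdist_le) (simp only: Ints_of_int)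
  ultimately show "phi x \<le> min (frac x) (1 - frac x)"
    by (simp add: dist_real_def frac_def)
next
  have "min (frac x) (1 - frac x) \<le> dist x a" if "a \<in> \<int>" for a
  proof -
    from that obtain n where n: "a = of_int n" by (auto elim: Ints_cases)
    show ?thesis
    proof (cases "n \<le> \<lfloor>x\<rfloor>")
      case True
      hence "real_of_int n \<le> of_int \<lfloor>x\<rfloor>" by linarith
      thus ?thesis using n by (simp add: dist_real_def frac_def)
    next
      case False
      hence "real_of_int n \<ge> of_int \<lfloor>x\<rfloor> + 1" by linarith
      thus ?thesis using n by (simp add: dist_real_def frac_def)
    qed
  qed
  thus "min (frac x) (1 - frac x) \<le> phi x"
    unfolding phi_def by (subst infdist_notempty) (auto intro!: cINF_greatest)
qed

lemma phi_nonneg: "0 \<le> phi x" and phi_le: "phi x \<le> 1/2"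
  using frac_ge_0[of x] frac_lt_1[of x] by (auto simp: phi_formula min_def)

lemma phi_int_shift: "phi (x + of_int n) = phi x"
  by (simp add: phi_formula)

lemma phi_nat_shift: "phi (x + of_nat n) = phi x"
  using phi_int_shift[of x "int n"] by simp

lemma phi_neg: "phi (- x) = phi x"
proof (cases "x \<in> \<int>")
  case True
  hence a: "frac x = 0" "frac (-x) = 0" using frac_eq_0_iff by auto
  show ?thesis by (simp only: phi_formula a)
next
  case False
  thus ?thesis by (auto simp: phi_formula frac_neg)
qed

lemma phi_low: "0 \<le> s \<Longrightarrow> s \<le> 1/2 \<Longrightarrow> phi s = s"
  by (simp add: phi_formula frac_eq)

lemma phi_high: "1/2 \<le> s \<Longrightarrow> s \<le> 1 \<Longrightarrow> phi s = 1 - s"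
proof -
  assume "1/2 \<le> s" "s \<le> 1"
  show ?thesis
  proof (cases "s = 1")
    case True thus ?thesis by (simp add: phi_formula)
  next
    case False thus ?thesis using \<open>1/2 \<le> s\<close> \<open>s \<le> 1\<close> by (simp add: phi_formula frac_eq)
  qed
qed

lemma takagi_summable: "summable (\<lambda>n. phi (2 ^ n * x) / 2 ^ n)"
proof (rule summable_comparison_test')
  show "summable (\<lambda>n. (1/2::real) ^ n)" by simp
  show "norm (phi (2 ^ n * x) / 2 ^ n) \<le> (1/2) ^ n" for n
    using phi_nonneg[of "2^n*x"] phi_le[of "2^n*x"] by (simp add: power_divide divide_right_mono)
qed

lemma takagi_rec: "takagi x = phi x + takagi (2 * x) / 2"
proof -
  have "takagi x = phi (2 ^ 0 * x) / 2 ^ 0 + (\<Sum>n. phi (2 ^ Suc n * x) / 2 ^ Suc n)"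
    unfolding takagi_def using suminf_split_head[OF takagi_summable[of x]] by simp
  also have "(\<lambda>n. phi (2 ^ Suc n * x) / 2 ^ Suc n) = (\<lambda>n. (phi (2 ^ n * (2 * x)) / 2 ^ n) / 2)"
    by (simp add: mult.assoc mult.commute)
  also have "(\<Sum>n. (phi (2 ^ n * (2 * x)) / 2 ^ n) / 2) = takagi (2*x) / 2"
    unfolding takagi_def by (rule suminf_divide[OF takagi_summable])
  finally show ?thesis by simp
qed

lemma takagi_nonneg: "0 \<le> takagi x"
  unfolding takagi_def by (rule suminf_nonneg[OF takagi_summable]) (simp add: phi_nonneg)

lemma takagi_le1: "takagi x \<le> 1"
proof -
  have "takagi x \<le> (\<Sum>n. (1/2::real) ^ Suc n)"
    unfolding takagi_def
  proof (rule suminf_le[OF _ takagi_summable])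
    show "summable (\<lambda>n. (1/2::real) ^ Suc n)" using power_half_series summable_def by blast
    fix n
    have "phi (2 ^ n * x) / 2 ^ n \<le> (1/2) / 2 ^ n"
      using divide_right_mono[OF phi_le[of "2^n*x"], of "2^n"] by simp
    thus "phi (2 ^ n * x) / 2 ^ n \<le> (1/2::real) ^ Suc n" by (simp add: power_divide)
  qed
  also have "\<dots> = 1" using power_half_series sums_unique by metis
  finally show ?thesis .
qed


lemma takagi_int_shift: "takagi (x + of_int m) = takagi x"
proof -
  have "phi (2 ^ n * (x + of_int m)) = phi (2 ^ n * x)" for n
  proof -
    have eq: "2 ^ n * (x + of_int m) = 2 ^ n * x + of_int (2 ^ n * m)" by (simp add: algebra_simps)
    show ?thesis by (simp only: eq phi_int_shift)
  qed
  thus ?thesis unfolding takagi_def by simp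
qed

lemma takagi_nat_shift: "takagi (x + of_nat m) = takagi x"
  using takagi_int_shift[of x "int m"] by simp

lemma takagi_neg: "takagi (- x) = takagi x"
  unfolding takagi_def by (simp add: phi_neg[of "2 ^ _ * x", symmetric])

lemma takagi_0: "takagi 0 = 0"
  unfolding takagi_def phi_formula by simp

lemma takagi_int: "takagi (of_int m) = 0"
  using takagi_int_shift[of 0 m] takagi_0 by simp

lemma takagi_1: "takagi 1 = 0"
  using takagi_int[of 1] by simp

lemma takagi_refl: "takagi (1 - y) = takagi y"
  using takagi_int_shift[of "-y" 1] takagi_neg[of y] by simp

lemma takagi_low: "0 \<le> s \<Longrightarrow> s \<le> 1/2 \<Longrightarrow> takagi s = s + takagi (2 * s) / 2"
  using takagi_rec[of s] phi_low[of s] by simp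

lemma takagi_high: "1/2 \<le> s \<Longrightarrow> s \<le> 1 \<Longrightarrow> takagi s = 1 - s + takagi (2 * s - 1) / 2"
  using takagi_rec[of s] phi_high[of s] takagi_int_shift[of "2 * s - 1" 1] by simp

lemma takagi_four: "takagi y = phi y + phi (2*y) / 2 + takagi (4*y) / 4"
  using takagi_rec[of y] takagi_rec[of "2*y"] by simp

lemma phi_pair_le: "phi y + phi (2*y) / 2 \<le> 1/2"
proof -
  define f where "f = frac y"
  have y: "y = f + of_int \<lfloor>y\<rfloor>" by (simp add: f_def frac_def)
  have f: "0 \<le> f" "f < 1" by (auto simp: f_def frac_lt_1)
  have e1: "phi y = phi f" by (subst y, rule phi_int_shift)
  have eq: "2 * y = 2 * f + of_int (2 * \<lfloor>y\<rfloor>)" by (subst y) simp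
  have e2: "phi (2*y) = phi (2*f)" by (simp only: eq phi_int_shift)
  have "phi f + phi (2*f) / 2 \<le> 1/2"
  proof -
    consider "f \<le> 1/4" | "1/4 \<le> f" "f \<le> 1/2" | "1/2 \<le> f" "f \<le> 3/4" | "3/4 \<le> f" by linarith
    thus ?thesis
    proof cases
      case 1 thus ?thesis using f by (simp add: phi_low)
    next
      case 2 thus ?thesis using f by (simp add: phi_low phi_high field_simps)
    next
      case 3
      have "phi (2*f) = phi (2*f - 1)" using phi_int_shift[of "2*f-1" 1] by simp
      also have "\<dots> = 2*f - 1" using 3 by (simp add: phi_low)
      finally have "phi (2*f) = 2*f - 1" .
      moreover have "phi f = 1 - f" using 3 by (simp add: phi_high)
      ultimately show ?thesis by linarith
    next
      case 4
      have "phi (2*f) = phi (2*f - 1)" using phi_int_shift[of "2*f-1" 1] by simp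
      also have "\<dots> = 2 - 2*f" using 4 f by (simp add: phi_high)
      finally have "phi (2*f) = 2 - 2*f" .
      moreover have "phi f = 1 - f" using 4 f by (simp add: phi_high)
      ultimately show ?thesis using 4 by linarith
    qed
  qed
  thus ?thesis using e1 e2 by simp
qed

lemma phi_pair_eq: "1/4 \<le> y \<Longrightarrow> y \<le> 3/4 \<Longrightarrow> phi y + phi (2*y) / 2 = 1/2"
proof -
  assume a: "1/4 \<le> y" "y \<le> 3/4"
  have "phi (2*y) = phi (2*y - 1)" using phi_int_shift[of "2*y-1" 1] by simp
  thus ?thesis using a by (cases "y \<le> 1/2") (simp_all add: phi_low phi_high field_simps)
qed

lemma takagi_le_aux: "takagi y \<le> 2/3 + (1/4) ^ n"
proof (induction n arbitrary: y)
  case 0 thus ?case using takagi_le1[of y] by simp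
next
  case (Suc n)
  have h1: "takagi (4*y) / 4 \<le> (2/3 + (1/4)^n) / 4"
    by (rule divide_right_mono) (simp_all add: Suc)
  have h2: "(2/3 + (1/4::real)^n) / 4 = 1/6 + (1/4)^(Suc n)" by simp
  show ?case using takagi_four[of y] phi_pair_le[of y] h1 h2 by linarith
qed

lemma takagi_le: "takagi y \<le> 2/3"
proof (rule ccontr)
  assume "\<not> ?thesis"
  hence "0 < takagi y - 2/3" by simp
  then obtain n where "(1/4::real) ^ n < takagi y - 2/3"
    using real_arch_pow_inv[of "takagi y - 2/3" "1/4"] by auto
  thus False using takagi_le_aux[of y n] by simp
qed


fun sl :: "nat \<Rightarrow> int \<Rightarrow> int" where
  "sl 0 p = 0"
| "sl (Suc N) p = sl N (p div 2) + 1 - 2 * (p mod 2)"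

lemma takagi_half_step:
  assumes "b = 0 \<or> b = 1" "0 \<le> z" "z \<le> 1"
  shows "takagi ((b + z) / 2) - takagi (b / 2) = (1 - 2 * b) * z / 2 + takagi z / 2"
  using assms(1)
proof
  assume b: "b = 0"
  have "takagi (z/2) = z/2 + takagi z / 2" using takagi_low[of "z/2"] assms by simp
  thus ?thesis using b takagi_0 by simp
next
  assume b: "b = 1"
  have zz: "2 * ((1+z)/2) - 1 = (z::real)" by (simp add: field_simps)
  have "takagi ((1+z)/2) = 1 - (1+z)/2 + takagi z / 2" using takagi_high[of "(1+z)/2"] assms unfolding zz by simp
  moreover have "takagi (1/2) = 1/2" using takagi_low[of "1/2"] takagi_1 by simp
  ultimately show ?thesis using b by (simp add: field_simps)
qed

lemma selfsim:
  "0 \<le> z \<Longrightarrow> z \<le> 1 \<Longrightarrow>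
   takagi ((of_int p + z) / 2 ^ N) = takagi (of_int p / 2 ^ N) + of_int (sl N p) * z / 2 ^ N + takagi z / 2 ^ N"
proof (induction N arbitrary: p z)
  case 0
  show ?case using takagi_int_shift[of z p] takagi_int[of p] by (simp add: add.commute)
next
  case (Suc N)
  define q where "q = p div 2"
  define b where "b = p mod 2"
  have pq: "p = 2 * q + b" by (simp add: q_def b_def)
  have b01: "b = 0 \<or> b = 1" by (auto simp: b_def)
  hence b01r: "real_of_int b = 0 \<or> real_of_int b = 1" by auto
  define w where "w = (of_int b + z) / 2"
  have w01: "0 \<le> w" "w \<le> 1" using b01 Suc.prems by (auto simp: w_def)
  have e1: "(of_int p + z :: real) / 2 ^ Suc N = (of_int q + w) / 2 ^ N"
    by (simp add: pq w_def field_simps)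
  have e2: "(of_int p :: real) / 2 ^ Suc N = (of_int q + of_int b / 2) / 2 ^ N"
    by (simp add: pq field_simps)
  have I1: "takagi ((of_int q + w) / 2 ^ N) = takagi (of_int q / 2 ^ N) + of_int (sl N q) * w / 2 ^ N + takagi w / 2 ^ N"
    using Suc.IH w01 by blast
  have I2: "takagi ((of_int q + of_int b / 2) / 2 ^ N) = takagi (of_int q / 2 ^ N) + of_int (sl N q) * (of_int b / 2) / 2 ^ N + takagi (of_int b / 2) / 2 ^ N"
    using Suc.IH b01 takagi_0 by auto
  have H: "takagi w - takagi (of_int b / 2) = (1 - 2 * of_int b) * z / 2 + takagi z / 2"
    unfolding w_def by (rule takagi_half_step[OF b01r Suc.prems])
  have sl: "sl (Suc N) p = sl N q + 1 - 2 * b" by (simp add: q_def b_def)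
  have "takagi ((of_int p + z) / 2 ^ Suc N) - takagi (of_int p / 2 ^ Suc N)
      = (of_int (sl N q) * (w - of_int b / 2) + (takagi w - takagi (of_int b / 2))) / 2 ^ N"
    unfolding e1 e2 I1 I2 by (simp add: field_simps)
  also have "\<dots> = (of_int (sl N q) * (z/2) + (1 - 2 * of_int b) * z / 2 + takagi z / 2) / 2 ^ N"
    unfolding H by (simp add: w_def field_simps)
  also have "\<dots> = of_int (sl (Suc N) p) * z / 2 ^ Suc N + takagi z / 2 ^ Suc N"
    unfolding sl by (simp add: field_simps)
  finally show ?case by simp
qed


fun pp :: "(nat \<Rightarrow> nat) \<Rightarrow> int \<Rightarrow> nat \<Rightarrow> int" where
  "pp a k 0 = k"
| "pp a k (Suc N) = 2 * pp a k N + int (a (Suc N))"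

definition yy :: "(nat \<Rightarrow> nat) \<Rightarrow> nat \<Rightarrow> real" where
  "yy a N = (\<Sum>n. real (a (N + n + 1)) / 2 ^ (n + 1))"

definition DD :: "(nat \<Rightarrow> nat) \<Rightarrow> int \<Rightarrow> nat \<Rightarrow> int" where
  "DD a k N = sl N (pp a k N)"

lemma superdiff_memI:
  assumes "d > 0" "\<And>h. h \<noteq> 0 \<Longrightarrow> \<bar>h\<bar> < d \<Longrightarrow> f (x + h) - f x \<le> \<xi> * h"
  shows "\<xi> \<in> superdiff f x"
proof -
  have A: "\<forall>h. h \<noteq> 0 \<and> dist h 0 < d \<longrightarrow> ereal ((f (x + h) - f x - \<xi> * h) / \<bar>h\<bar>) \<le> 0"
  proof (intro allI impI)
    fix h :: real assume "h \<noteq> 0 \<and> dist h 0 < d"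
    hence "f (x + h) - f x - \<xi> * h \<le> 0" using assms(2)[of h] by (auto simp: dist_real_def)
    thus "ereal ((f (x + h) - f x - \<xi> * h) / \<bar>h\<bar>) \<le> 0"
      by (simp add: divide_nonpos_nonneg)
  qed
  have "eventually (\<lambda>h. ereal ((f (x + h) - f x - \<xi> * h) / \<bar>h\<bar>) \<le> 0) (at 0)"
    unfolding eventually_at using A assms(1) by blast
  thus ?thesis unfolding superdiff_def by (auto intro: Limsup_bounded)
qed

lemma superdiff_seq:
  assumes "\<xi> \<in> superdiff f x" "\<epsilon> > 0" "g \<longlonglongrightarrow> 0" "\<And>n. g n \<noteq> 0"
  shows "eventually (\<lambda>n. (f (x + g n) - f x - \<xi> * g n) / \<bar>g n\<bar> < \<epsilon>) sequentially"
proof -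
  have "Limsup (at 0) (\<lambda>h. ereal ((f (x + h) - f x - \<xi> * h) / \<bar>h\<bar>)) < ereal \<epsilon>"
    using assms(1,2) unfolding superdiff_def by (auto intro: le_less_trans)
  hence ev: "eventually (\<lambda>h. ereal ((f (x + h) - f x - \<xi> * h) / \<bar>h\<bar>) < ereal \<epsilon>) (at 0)"
    by (rule Limsup_lessD)
  have lim: "filterlim g (at 0) sequentially"
    by (rule filterlim_atI) (use assms(3,4) in auto)
  have "eventually (\<lambda>n. ereal ((f (x + g n) - f x - \<xi> * g n) / \<bar>g n\<bar>) < ereal \<epsilon>) sequentially"
    using eventually_compose_filterlim[OF ev lim] .
  thus ?thesis by simp
qed


lemma sl_shift: "sl (J + i) (p * 2 ^ i) = sl J p + int i"
proof (induction i)
  case 0 thus ?case by simp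
next
  case (Suc i)
  have "p * 2 ^ Suc i = 2 * (p * 2 ^ i)" by simp
  hence "(p * 2 ^ Suc i) div 2 = p * 2 ^ i" "(p * 2 ^ Suc i) mod 2 = 0" by simp_all
  thus ?case using Suc by simp
qed

lemma dyadic_empty:
  assumes "x \<in> dyadic"
  shows "superdiff takagi x = {}"
proof (rule ccontr)
  assume "superdiff takagi x \<noteq> {}"
  then obtain \<xi> where xi: "\<xi> \<in> superdiff takagi x" by auto
  obtain p :: int and J :: nat where x: "x = of_int p / 2 ^ J" using assms unfolding dyadic_def by auto
  define g :: "nat \<Rightarrow> real" where "g i = 1 / 2 ^ (J + i)" for i
  have gnz: "g i \<noteq> 0" for i by (simp add: g_def)
  have gpos: "g i > 0" for i by (simp add: g_def)
  have "g \<longlonglongrightarrow> 0"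
  proof (rule Lim_null_comparison)
    show "\<forall>\<^sub>F i in sequentially. norm (g i) \<le> (1/2) ^ i"
    proof (rule always_eventually, rule allI)
      fix i
      have "(2::real) ^ i \<le> 2 ^ (J + i)" by (rule power_increasing) simp_all
      thus "norm (g i) \<le> (1/2) ^ i" by (simp add: g_def power_divide frac_le)
    qed
    show "(\<lambda>i. (1/2::real) ^ i) \<longlonglongrightarrow> 0" by (rule LIMSEQ_power_zero) simp
  qed
  from superdiff_seq[OF xi _ this gnz, of 1] obtain N0 where
    N0: "\<And>i. i \<ge> N0 \<Longrightarrow> (takagi (x + g i) - takagi x - \<xi> * g i) / \<bar>g i\<bar> < 1"
    unfolding eventually_sequentially by auto
  have Q: "(takagi (x + g i) - takagi x - \<xi> * g i) / \<bar>g i\<bar> = of_int (sl J p) + of_nat i - \<xi>" for i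
  proof -
    have e1: "x = of_int (p * 2 ^ i) / 2 ^ (J + i)" by (simp add: x power_add)
    have e2: "x + g i = (of_int (p * 2 ^ i) + 1) / 2 ^ (J + i)" by (simp add: e1 g_def add_divide_distrib)
    have "takagi (x + g i) - takagi x = of_int (sl (J + i) (p * 2 ^ i)) * g i"
      unfolding e2 using selfsim[of 1 "p * 2 ^ i" "J + i"] e1 takagi_1 by (simp add: g_def)
    hence "takagi (x + g i) - takagi x - \<xi> * g i = (of_int (sl J p) + of_nat i - \<xi>) * g i"
      by (simp add: sl_shift algebra_simps)
    thus ?thesis using gpos[of i] by simp
  qed
  define i where "i = max N0 (nat \<lceil>\<xi> - of_int (sl J p)\<rceil> + 1)"
  have "real i \<ge> \<xi> - of_int (sl J p) + 1" unfolding i_def by linarith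
  moreover have "of_int (sl J p) + of_nat i - \<xi> < 1" using N0[of i] Q[of i] by (simp add: i_def)
  ultimately show False by simp
qed

context
  fixes x :: real and k :: int and a :: "nat \<Rightarrow> nat"
  assumes digits: "\<forall>n\<ge>1. a n \<in> {0, 1}"
    and expansion: "x = of_int k + (\<Sum>n. real (a (Suc n)) / 2 ^ Suc n)"
begin

lemma a01: "a (Suc n) = 0 \<or> a (Suc n) = 1"
  using digits by auto

lemma a_le1: "real (a (Suc n)) \<le> 1"
  using a01[of n] by auto

lemma yy_summable: "summable (\<lambda>n. real (a (N + n + 1)) / 2 ^ (n + 1))"
proof (rule summable_comparison_test')
  show "summable (\<lambda>n. (1/2::real) ^ Suc n)" using power_half_series summable_def by blast
  fix n
  have "real (a (Suc (N + n))) / 2 ^ (n+1) \<le> 1 / 2 ^ (n+1)"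
    using a_le1[of "N+n"] by (simp add: divide_right_mono)
  thus "norm (real (a (N + n + 1)) / 2 ^ (n + 1)) \<le> (1/2::real) ^ Suc n"
    by (simp add: power_divide)
qed

lemma yy_nonneg: "0 \<le> yy a N"
  unfolding yy_def by (rule suminf_nonneg[OF yy_summable]) simp

lemma yy_le1: "yy a N \<le> 1"
proof -
  have "yy a N \<le> (\<Sum>n. (1/2::real) ^ Suc n)"
    unfolding yy_def
  proof (rule suminf_le[OF _ yy_summable])
    show "summable (\<lambda>n. (1/2::real) ^ Suc n)" using power_half_series summable_def by blast
    fix n
    have "real (a (Suc (N + n))) / 2 ^ (n+1) \<le> 1 / 2 ^ (n+1)"
      using a_le1[of "N+n"] by (simp add: divide_right_mono)
    thus "real (a (N + n + 1)) / 2 ^ (n + 1) \<le> (1/2::real) ^ Suc n"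
      by (simp add: power_divide)
  qed
  also have "\<dots> = 1" using power_half_series sums_unique by metis
  finally show ?thesis .
qed

lemma yy_step: "yy a N = (real (a (Suc N)) + yy a (Suc N)) / 2"
proof -
  have "(\<Sum>n. real (a (N + Suc n + 1)) / 2 ^ (Suc n + 1)) = yy a N - real (a (N + 0 + 1)) / 2 ^ (0 + 1)"
    unfolding yy_def by (rule suminf_split_head[OF yy_summable])
  moreover have "(\<lambda>n. real (a (N + Suc n + 1)) / 2 ^ (Suc n + 1)) = (\<lambda>n. (real (a (Suc N + n + 1)) / 2 ^ (n + 1)) / 2)"
    by (simp add: algebra_simps)
  moreover have "(\<Sum>n. (real (a (Suc N + n + 1)) / 2 ^ (n + 1)) / 2) = yy a (Suc N) / 2"
    unfolding yy_def by (rule suminf_divide[OF yy_summable])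
  ultimately show ?thesis by simp
qed

lemma x_repr: "x = (of_int (pp a k N) + yy a N) / 2 ^ N"
proof (induction N)
  case 0
  have "yy a 0 = (\<Sum>n. real (a (Suc n)) / 2 ^ Suc n)" unfolding yy_def by simp
  thus ?case using expansion by simp
next
  case (Suc N)
  show ?case using Suc yy_step[of N] by (simp add: field_simps)
qed

lemma pp_div: "pp a k (Suc N) div 2 = pp a k N" and pp_mod: "pp a k (Suc N) mod 2 = int (a (Suc N))"
  using a01[of N] by auto

lemma DD_step: "DD a k (Suc N) = DD a k N + 1 - 2 * int (a (Suc N))"
  unfolding DD_def using pp_div[of N] pp_mod[of N] by simp

lemma DD_formula: "DD a k N = int N - 2 * (\<Sum>j=1..<N+1. int (a j))"
proof (induction N)
  case 0 thus ?case by (simp add: DD_def)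
next
  case (Suc N) thus ?case by (simp add: DD_step)
qed

lemma nondyadic:
  assumes "x \<notin> dyadic"
  shows "0 < yy a N" "yy a N < 1" "yy a N \<noteq> 1/2"
proof -
  have r: "x = (of_int (pp a k N) + yy a N) / 2 ^ N" by (rule x_repr)
  show "0 < yy a N"
  proof (rule ccontr)
    assume "\<not> 0 < yy a N"
    hence "yy a N = 0" using yy_nonneg[of N] by simp
    hence "x = of_int (pp a k N) / 2 ^ N" using r by simp
    thus False using assms unfolding dyadic_def by blast
  qed
  show "yy a N < 1"
  proof (rule ccontr)
    assume "\<not> yy a N < 1"
    hence "yy a N = 1" using yy_le1[of N] by simp
    hence "x = of_int (pp a k N + 1) / 2 ^ N" using r by simp
    thus False using assms unfolding dyadic_def by blast
  qed
  show "yy a N \<noteq> 1/2"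
  proof
    assume "yy a N = 1/2"
    hence "x = of_int (2 * pp a k N + 1) / 2 ^ Suc N" using r by (simp add: field_simps)
    thus False using assms unfolding dyadic_def by blast
  qed
qed

lemma digit0: "x \<notin> dyadic \<Longrightarrow> a (Suc N) = 0 \<Longrightarrow> yy a N < 1/2"
  using yy_step[of N] nondyadic(2)[of "Suc N"] by simp

lemma digit1: "x \<notin> dyadic \<Longrightarrow> a (Suc N) = 1 \<Longrightarrow> yy a N > 1/2"
  using yy_step[of N] nondyadic(1)[of "Suc N"] by simp

lemma alg1: "(X::real) = A + s*y/P + ty/P \<Longrightarrow> Z = A + s*z/P + tz/P \<Longrightarrow> Z - X = s*(z-y)/P + (tz-ty)/P"
  by (simp add: diff_divide_distrib algebra_simps)

lemma local_formula:
  assumes "0 \<le> z" "z \<le> 1"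
  shows "takagi ((of_int (pp a k N) + z) / 2 ^ N) - takagi x
       = of_int (DD a k N) * (z - yy a N) / 2 ^ N + (takagi z - takagi (yy a N)) / 2 ^ N"
proof -
  have "takagi x = takagi ((of_int (pp a k N) + yy a N) / 2 ^ N)" using x_repr[of N] by simp
  also have "\<dots> = takagi (of_int (pp a k N) / 2 ^ N) + of_int (DD a k N) * yy a N / 2 ^ N + takagi (yy a N) / 2 ^ N"
    unfolding DD_def by (rule selfsim[OF yy_nonneg yy_le1])
  finally show ?thesis
    using selfsim[OF assms, of "pp a k N" N] unfolding DD_def by (rule alg1)
qed

lemma reflect:
  "takagi (x + (1 - 2 * yy a N) / 2 ^ N) - takagi x = of_int (DD a k N) * ((1 - 2 * yy a N) / 2 ^ N)"
proof -
  have e: "x + (1 - 2 * yy a N) / 2 ^ N = (of_int (pp a k N) + (1 - yy a N)) / 2 ^ N"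
    using x_repr[of N] by (simp add: field_simps)
  show ?thesis unfolding e
    using local_formula[of "1 - yy a N" N] yy_nonneg[of N] yy_le1[of N] takagi_refl[of "yy a N"]
    by (simp add: field_simps)
qed


lemma pairs_T_aux:
  "\<forall>N. (\<forall>i. a (N + 1 + 2 * i) + a (N + 2 + 2 * i) = 1) \<longrightarrow> \<bar>takagi (yy a N) - 2/3\<bar> \<le> (1/4) ^ j"
proof (induction j)
  case 0
  show ?case
  proof (intro allI impI)
    fix N
    show "\<bar>takagi (yy a N) - 2/3\<bar> \<le> (1/4) ^ 0"
      using takagi_nonneg[of "yy a N"] takagi_le1[of "yy a N"] by (simp add: abs_le_iff)
  qed
next
  case (Suc j)
  show ?case
  proof (intro allI impI)
    fix N assume P: "\<forall>i. a (N + 1 + 2 * i) + a (N + 2 + 2 * i) = 1"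
    have P2: "\<forall>i. a (Suc (Suc N) + 1 + 2 * i) + a (Suc (Suc N) + 2 + 2 * i) = 1"
    proof
      fix i show "a (Suc (Suc N) + 1 + 2 * i) + a (Suc (Suc N) + 2 + 2 * i) = 1"
        using P[rule_format, of "Suc i"] by (simp add: algebra_simps)
    qed
    have IH: "\<bar>takagi (yy a (Suc (Suc N))) - 2/3\<bar> \<le> (1/4) ^ j" using Suc P2 by blast
    have s0: "a (Suc N) + a (Suc (Suc N)) = 1" using P[rule_format, of 0] by simp
    have y: "yy a N = (real (a (Suc N)) + (real (a (Suc (Suc N))) + yy a (Suc (Suc N))) / 2) / 2"
      using yy_step[of N] yy_step[of "Suc N"] by simp
    have y4: "4 * yy a N = yy a (Suc (Suc N)) + real (2 * a (Suc N) + a (Suc (Suc N)))"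
      unfolding y by (simp add: field_simps)
    have T4: "takagi (4 * yy a N) = takagi (yy a (Suc (Suc N)))"
      unfolding y4 by (rule takagi_nat_shift)
    have b: "0 \<le> yy a (Suc (Suc N))" "yy a (Suc (Suc N)) \<le> 1"
      using yy_nonneg yy_le1 by auto
    from s0 consider "a (Suc N) = 0" "a (Suc (Suc N)) = 1" | "a (Suc N) = 1" "a (Suc (Suc N)) = 0"
      by arith
    hence rng: "1/4 \<le> yy a N" "yy a N \<le> 3/4"
      by (cases; use y b in simp)+
    have "takagi (yy a N) = 1/2 + takagi (yy a (Suc (Suc N))) / 4"
      using takagi_four[of "yy a N"] phi_pair_eq[OF rng] T4 by simp
    hence E: "takagi (yy a N) - 2/3 = (takagi (yy a (Suc (Suc N))) - 2/3) / 4" by simp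
    have "\<bar>takagi (yy a N) - 2/3\<bar> = \<bar>takagi (yy a (Suc (Suc N))) - 2/3\<bar> / 4"
      unfolding E by (simp add: abs_divide)
    also have "\<dots> \<le> (1/4)^j / 4" using IH by simp
    finally show "\<bar>takagi (yy a N) - 2/3\<bar> \<le> (1/4) ^ Suc j" by simp
  qed
qed

lemma pairs_T:
  assumes "\<forall>i. a (N + 1 + 2 * i) + a (N + 2 + 2 * i) = 1"
  shows "takagi (yy a N) = 2/3"
proof (rule ccontr)
  assume "takagi (yy a N) \<noteq> 2/3"
  hence pos: "0 < \<bar>takagi (yy a N) - 2/3\<bar>" by simp
  obtain n where "(1/4::real) ^ n < \<bar>takagi (yy a N) - 2/3\<bar>"
    using real_arch_pow_inv[OF pos, of "1/4"] by auto
  thus False using pairs_T_aux[of n] assms by force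
qed

lemma locmax:
  assumes "x \<notin> dyadic" "takagi (yy a N) = 2/3" "\<bar>h\<bar> < min (yy a N) (1 - yy a N) / 2 ^ N"
  shows "takagi (x + h) - takagi x \<le> of_int (DD a k N) * h"
proof -
  define z where "z = yy a N + 2 ^ N * h"
  have "\<bar>2 ^ N * h\<bar> < min (yy a N) (1 - yy a N)"
    using assms(3) by (simp add: abs_mult field_simps)
  hence z: "0 \<le> z" "z \<le> 1" unfolding z_def by (auto simp: abs_less_iff)
  have e: "x + h = (of_int (pp a k N) + z) / 2 ^ N"
    using x_repr[of N] by (simp add: z_def field_simps)
  have "takagi (x + h) - takagi x = of_int (DD a k N) * h + (takagi z - 2/3) / 2 ^ N"
    unfolding e local_formula[OF z] assms(2) by (simp add: z_def)
  also have "\<dots> \<le> of_int (DD a k N) * h"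
    using takagi_le[of z] by (simp add: divide_nonpos_pos)
  finally show ?thesis .
qed

lemma factA:
  assumes nd: "x \<notin> dyadic" and xi: "\<xi> \<in> superdiff takagi x" and e: "\<epsilon> > 0"
  shows "\<exists>N0. \<forall>N\<ge>N0. (a (Suc N) = 0 \<longrightarrow> of_int (DD a k N) - \<xi> < \<epsilon>) \<and>
                        (a (Suc N) = 1 \<longrightarrow> \<xi> - of_int (DD a k N) < \<epsilon>)"
proof -
  define g where "g N = (1 - 2 * yy a N) / 2 ^ N" for N
  have gnz: "g N \<noteq> 0" for N using nondyadic(3)[OF nd, of N] by (auto simp: g_def)
  have "g \<longlonglongrightarrow> 0"
  proof (rule Lim_null_comparison)
    show "\<forall>\<^sub>F N in sequentially. norm (g N) \<le> (1/2) ^ N"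
    proof (rule always_eventually, rule allI)
      fix N
      have "\<bar>1 - 2 * yy a N\<bar> \<le> 1" using yy_nonneg[of N] yy_le1[of N] by auto
      thus "norm (g N) \<le> (1/2) ^ N" by (simp add: g_def power_divide abs_divide divide_right_mono)
    qed
    show "(\<lambda>N. (1/2::real) ^ N) \<longlonglongrightarrow> 0" by (rule LIMSEQ_power_zero) simp
  qed
  from superdiff_seq[OF xi e this gnz] obtain N0 where
    N0: "\<And>N. N \<ge> N0 \<Longrightarrow> (takagi (x + g N) - takagi x - \<xi> * g N) / \<bar>g N\<bar> < \<epsilon>"
    unfolding eventually_sequentially by blast
  have Q: "takagi (x + g N) - takagi x - \<xi> * g N = (of_int (DD a k N) - \<xi>) * g N" for N
    using reflect[of N] unfolding g_def[symmetric] by (simp add: algebra_simps)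
  show ?thesis
  proof (intro exI[of _ N0] allI impI conjI)
    fix N assume N: "N \<ge> N0"
    { assume "a (Suc N) = 0"
      hence "yy a N < 1/2" using digit0[OF nd] by simp
      hence "g N > 0" by (simp add: g_def)
      thus "of_int (DD a k N) - \<xi> < \<epsilon>" using N0[OF N] unfolding Q by simp }
    { assume "a (Suc N) = 1"
      hence "yy a N > 1/2" using digit1[OF nd] by simp
      hence "g N < 0" by (simp add: g_def divide_neg_pos)
      hence "(of_int (DD a k N) - \<xi>) * g N / \<bar>g N\<bar> = \<xi> - of_int (DD a k N)" by simp
      thus "\<xi> - of_int (DD a k N) < \<epsilon>" using N0[OF N] unfolding Q by simp }
  qed
qed

lemma memB:
  assumes nd: "x \<notin> dyadic" and T1: "takagi (yy a N1) = 2/3" and T2: "takagi (yy a N2) = 2/3"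
    and le1: "of_int (DD a k N1) \<le> \<xi>" and le2: "\<xi> \<le> of_int (DD a k N2)"
  shows "\<xi> \<in> superdiff takagi x"
proof -
  define d1 where "d1 = min (yy a N1) (1 - yy a N1) / 2 ^ N1"
  define d2 where "d2 = min (yy a N2) (1 - yy a N2) / 2 ^ N2"
  have "d1 > 0" using nondyadic[OF nd, of N1] by (simp add: d1_def)
  moreover have "d2 > 0" using nondyadic[OF nd, of N2] by (simp add: d2_def)
  ultimately have dpos: "min d1 d2 > 0" by simp
  show ?thesis
  proof (rule superdiff_memI[OF dpos])
    fix h :: real assume h: "h \<noteq> 0" "\<bar>h\<bar> < min d1 d2"
    show "takagi (x + h) - takagi x \<le> \<xi> * h"
    proof (cases "h > 0")
      case True
      have "takagi (x + h) - takagi x \<le> of_int (DD a k N1) * h"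
        using locmax[OF nd T1] h by (simp add: d1_def)
      also have "\<dots> \<le> \<xi> * h" using le1 True by (simp add: mult_right_mono)
      finally show ?thesis .
    next
      case False
      hence hn: "h < 0" using h by simp
      have "takagi (x + h) - takagi x \<le> of_int (DD a k N2) * h"
        using locmax[OF nd T2] h by (simp add: d2_def)
      also have "\<dots> \<le> \<xi> * h" using le2 hn by (simp add: mult_right_mono_neg)
      finally show ?thesis .
    qed
  qed
qed

lemma ge_from_inf:
  assumes nd: "x \<notin> dyadic" and xi: "\<xi> \<in> superdiff takagi x"
    and inf: "\<forall>N0. \<exists>N\<ge>N0. a (Suc N) = 0 \<and> DD a k N = d"
  shows "of_int d \<le> \<xi>"
proof (rule ccontr)
  assume "\<not> of_int d \<le> \<xi>"
  hence e: "of_int d - \<xi> > 0" by simp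
  obtain N0 where N0: "\<forall>N\<ge>N0. (a (Suc N) = 0 \<longrightarrow> of_int (DD a k N) - \<xi> < of_int d - \<xi>)"
    using factA[OF nd xi e] by blast
  obtain N where "N \<ge> N0" "a (Suc N) = 0" "DD a k N = d" using inf by blast
  thus False using N0 by auto
qed

lemma le_from_inf:
  assumes nd: "x \<notin> dyadic" and xi: "\<xi> \<in> superdiff takagi x"
    and inf: "\<forall>N0. \<exists>N\<ge>N0. a (Suc N) = 1 \<and> DD a k N = d"
  shows "\<xi> \<le> of_int d"
proof (rule ccontr)
  assume "\<not> \<xi> \<le> of_int d"
  hence e: "\<xi> - of_int d > 0" by simp
  obtain N0 where N0: "\<forall>N\<ge>N0. (a (Suc N) = 1 \<longrightarrow> \<xi> - of_int (DD a k N) < \<xi> - of_int d)"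
    using factA[OF nd xi e] by blast
  obtain N where "N \<ge> N0" "a (Suc N) = 1" "DD a k N = d" using inf by blast
  thus False using N0 by auto
qed

lemma DD_pairs:
  assumes "\<forall>i. a (m + 2 * i) + a (m + 2 * i + 1) = 1" "m \<ge> 1"
  shows "DD a k (m - 1 + 2 * i) = DD a k (m - 1)"
proof (induction i)
  case 0 thus ?case by simp
next
  case (Suc i)
  have e: "m - 1 + 2 * Suc i = Suc (Suc (m - 1 + 2 * i))" by simp
  have s1: "Suc (m - 1 + 2 * i) = m + 2 * i" and s2: "Suc (Suc (m - 1 + 2 * i)) = m + 2 * i + 1"
    using assms(2) by auto
  have p: "a (m + 2 * i) + a (m + 2 * i + 1) = 1" using assms(1) by blast
  show ?case unfolding e using DD_step[of "Suc (m - 1 + 2 * i)"] DD_step[of "m - 1 + 2 * i"] Suc p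
    unfolding s1 s2 by simp
qed

lemma pairs_T_from:
  assumes "\<forall>i. a (m + 2 * i) + a (m + 2 * i + 1) = 1" "m \<ge> 1"
  shows "takagi (yy a (m - 1)) = 2/3"
proof (rule pairs_T, rule allI)
  fix i
  have "m - 1 + 1 + 2 * i = m + 2 * i" "m - 1 + 2 + 2 * i = m + 2 * i + 1" using assms(2) by auto
  thus "a (m - 1 + 1 + 2 * i) + a (m - 1 + 2 + 2 * i) = 1" using assms(1) by simp
qed

lemma inf_often:
  assumes pr: "\<forall>i. a (m + 2 * i) + a (m + 2 * i + 1) = 1" and m: "m \<ge> 1"
    and no2: "\<not> (\<exists>m\<ge>1. \<forall>n\<ge>m. a n + a (Suc n) = 1)" and b: "b = 0 \<or> b = 1"
  shows "\<exists>i\<ge>i0. a (m + 2 * i) = b"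
proof (rule ccontr)
  assume "\<not> ?thesis"
  hence nb: "\<And>i. i \<ge> i0 \<Longrightarrow> a (m + 2 * i) \<noteq> b" by auto
  have ab: "a n \<le> 1" if "n \<ge> 1" for n using digits that by auto
  have "\<forall>n\<ge>m + 2 * i0. a n + a (Suc n) = 1"
  proof (intro allI impI)
    fix n assume n: "n \<ge> m + 2 * i0"
    define i where "i = (n - m) div 2"
    have i0: "i \<ge> i0" using n by (simp add: i_def)
    consider "n = m + 2 * i" | "n = m + 2 * i + 1" unfolding i_def using n by arith
    thus "a n + a (Suc n) = 1"
    proof cases
      case 1 thus ?thesis using pr by simp
    next
      case 2
      have x1: "a (m + 2 * i) \<noteq> b" using nb[OF i0] .
      have x2: "a (m + 2 * Suc i) \<noteq> b" using nb[of "Suc i"] i0 by simp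
      have p1: "a (m + 2 * i) + a (m + 2 * i + 1) = 1" using pr by blast
      have "a (m + 2 * i) \<le> 1" "a (m + 2 * Suc i) \<le> 1" using ab m by auto
      hence "a (m + 2 * i + 1) = b" "a (m + 2 * Suc i) = 1 - b" using x1 x2 p1 b by auto
      moreover have "Suc n = m + 2 * Suc i" using 2 by simp
      ultimately show ?thesis using 2 b by auto
    qed
  qed
  thus False using no2 m by (metis le_add1 order_trans)
qed

lemma part4_aux:
  assumes nd: "x \<notin> dyadic" and xi: "\<xi> \<in> superdiff takagi x"
  shows "\<exists>m\<ge>1. \<forall>i. a (m + 2 * i) + a (m + 2 * i + 1) = 1"
proof -
  define K where "K = \<lceil>\<xi> - 1/2\<rceil>"
  have K1: "of_int K \<ge> \<xi> - 1/2" unfolding K_def by simp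
  have K2: "of_int K < \<xi> - 1/2 + 1" unfolding K_def by linarith
  obtain N0 where N0: "\<forall>N\<ge>N0. (a (Suc N) = 0 \<longrightarrow> of_int (DD a k N) - \<xi> < 1/2) \<and>
                        (a (Suc N) = 1 \<longrightarrow> \<xi> - of_int (DD a k N) < 1/2)"
    using factA[OF nd xi, of "1/2"] by auto
  have up: "a (Suc N) = 0" if "N \<ge> N0" "DD a k N \<le> K - 1" for N
  proof -
    have "of_int (DD a k N) \<le> of_int K - (1::real)" using that(2) by linarith
    hence "\<not> (\<xi> - of_int (DD a k N) < 1/2)" using K2 by linarith
    thus ?thesis using N0 that(1) a01[of N] by auto
  qed
  have down: "a (Suc N) = 1" if "N \<ge> N0" "DD a k N \<ge> K + 1" for N
  proof -
    have "of_int (DD a k N) \<ge> of_int K + (1::real)" using that(2) by linarith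
    hence "\<not> (of_int (DD a k N) - \<xi> < 1/2)" using K1 by linarith
    thus ?thesis using N0 that(1) a01[of N] by auto
  qed
  have reach: "\<forall>N\<ge>N0. \<bar>DD a k N - K\<bar> \<le> int j \<longrightarrow> (\<exists>N'\<ge>N0. DD a k N' = K)" for j
  proof (induction j)
    case 0 thus ?case by auto
  next
    case (Suc j)
    show ?case
    proof (intro allI impI)
      fix N assume N: "N \<ge> N0" "\<bar>DD a k N - K\<bar> \<le> int (Suc j)"
      consider "DD a k N = K" | "DD a k N < K" | "DD a k N > K" by linarith
      thus "\<exists>N'\<ge>N0. DD a k N' = K"
      proof cases
        case 1 thus ?thesis using N by blast
      next
        case 2
        hence "a (Suc N) = 0" using up N by simp
        hence "DD a k (Suc N) = DD a k N + 1" using DD_step[of N] by simp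
        hence "\<bar>DD a k (Suc N) - K\<bar> \<le> int j" using 2 N by simp
        thus ?thesis using Suc.IH[rule_format, of "Suc N"] N(1) by simp
      next
        case 3
        hence "a (Suc N) = 1" using down N by simp
        hence "DD a k (Suc N) = DD a k N - 1" using DD_step[of N] by simp
        hence "\<bar>DD a k (Suc N) - K\<bar> \<le> int j" using 3 N by simp
        thus ?thesis using Suc.IH[rule_format, of "Suc N"] N(1) by simp
      qed
    qed
  qed
  obtain N1 where N1: "N1 \<ge> N0" "DD a k N1 = K"
    using reach[of "nat \<bar>DD a k N0 - K\<bar>"] by auto
  have stay: "DD a k (N1 + 2 * i) = K \<and> a (N1 + 1 + 2 * i) + a (N1 + 2 + 2 * i) = 1" for i
  proof (induction i)
    case 0
    show ?case
    proof (cases "a (Suc N1) = 0")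
      case True
      hence "DD a k (Suc N1) = K + 1" using DD_step[of N1] N1 by simp
      hence "a (Suc (Suc N1)) = 1" using down[of "Suc N1"] N1 by simp
      thus ?thesis using True N1 by simp
    next
      case False
      hence a1: "a (Suc N1) = 1" using a01[of N1] by simp
      hence "DD a k (Suc N1) = K - 1" using DD_step[of N1] N1 by simp
      hence "a (Suc (Suc N1)) = 0" using up[of "Suc N1"] N1 by simp
      thus ?thesis using a1 N1 by simp
    qed
  next
    case (Suc i)
    define N where "N = N1 + 2 * Suc i"
    have DN: "DD a k N = K"
    proof -
      have e: "N = Suc (Suc (N1 + 2 * i))" by (simp add: N_def)
      show ?thesis unfolding e using DD_step[of "Suc (N1 + 2 * i)"] DD_step[of "N1 + 2 * i"] Suc
        by (simp add: algebra_simps)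
    qed
    have NN: "N \<ge> N0" using N1 by (simp add: N_def)
    have "a (Suc N) + a (Suc (Suc N)) = 1"
    proof (cases "a (Suc N) = 0")
      case True
      hence "DD a k (Suc N) = K + 1" using DD_step[of N] DN by simp
      hence "a (Suc (Suc N)) = 1" using down[of "Suc N"] NN by simp
      thus ?thesis using True by simp
    next
      case False
      hence a1: "a (Suc N) = 1" using a01[of N] by simp
      hence "DD a k (Suc N) = K - 1" using DD_step[of N] DN by simp
      hence "a (Suc (Suc N)) = 0" using up[of "Suc N"] NN by simp
      thus ?thesis using a1 by simp
    qed
    thus ?case using DN by (simp add: N_def algebra_simps)
  qed
  show ?thesis
  proof (intro exI[of _ "Suc N1"] conjI allI)
    fix i show "a (Suc N1 + 2 * i) + a (Suc N1 + 2 * i + 1) = 1"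
      using stay[of i] by (simp add: algebra_simps)
  qed simp
qed

end


lemma img_shift: "(\<lambda>t. c + t) ` {u..v} = {c + u..c + v::real}"
proof safe
  fix y assume "y \<in> {c + u..c + v}"
  thus "y \<in> (\<lambda>t. c + t) ` {u..v}" by (intro image_eqI[of _ _ "y - c"]) auto
qed auto

theorem theorem2p6:
  fixes x :: real and k :: int and a :: "nat \<Rightarrow> nat"
  assumes digits: "\<forall>n\<ge>1. a n \<in> {0, 1}"
    and expansion: "x = of_int k + (\<Sum>n. real (a (Suc n)) / 2 ^ Suc n)"
  shows "(x \<in> dyadic \<longrightarrow> superdiff takagi x = {})
    \<and> (\<forall>m\<ge>1. x \<notin> dyadic \<and> (\<forall>n\<ge>m. a n + a (Suc n) = 1) \<longrightarrow>
         superdiff takagi x =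
           (let c = real m - 1 - 2 * (\<Sum>j=1..<m. real (a j))
            in if a m = 0 then (\<lambda>t. c + t) ` {0..1} else (\<lambda>t. c + t) ` {-1..0}))
    \<and> (x \<notin> dyadic \<and> \<not> (\<exists>m\<ge>1. \<forall>n\<ge>m. a n + a (Suc n) = 1) \<longrightarrow>
         (\<forall>m\<ge>1. (\<forall>i. a (m + 2 * i) + a (m + 2 * i + 1) = 1) \<longrightarrow>
            superdiff takagi x = {real m - 1 - 2 * (\<Sum>j=1..<m. real (a j))}))
    \<and> (x \<notin> dyadic \<and> \<not> (\<exists>m\<ge>1. \<forall>n\<ge>m. a n + a (Suc n) = 1)
         \<and> \<not> (\<exists>m\<ge>1. \<forall>i. a (m + 2 * i) + a (m + 2 * i + 1) = 1) \<longrightarrow>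
         superdiff takagi x = {})"
proof -
  note D = digits expansion
  have cval: "real m - 1 - 2 * (\<Sum>j=1..<m. real (a j)) = of_int (DD a k (m - 1))" if m: "m \<ge> 1" for m
  proof -
    have "DD a k (m - 1) = int (m - 1) - 2 * (\<Sum>j=1..<m. int (a j))"
      using DD_formula[OF D, of "m - 1"] m by simp
    thus ?thesis using m by (simp add: of_nat_diff)
  qed
  have P1: "x \<in> dyadic \<longrightarrow> superdiff takagi x = {}" using dyadic_empty by blast
  have P2: "\<forall>m\<ge>1. x \<notin> dyadic \<and> (\<forall>n\<ge>m. a n + a (Suc n) = 1) \<longrightarrow>
         superdiff takagi x =
           (let c = real m - 1 - 2 * (\<Sum>j=1..<m. real (a j))
            in if a m = 0 then (\<lambda>t. c + t) ` {0..1} else (\<lambda>t. c + t) ` {-1..0})"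
  proof (intro allI impI)
    fix m :: nat assume m: "m \<ge> 1" and H: "x \<notin> dyadic \<and> (\<forall>n\<ge>m. a n + a (Suc n) = 1)"
    have nd: "x \<notin> dyadic" using H by blast
    have pr0: "\<forall>i. a (m + 2 * i) + a (m + 2 * i + 1) = 1" using H by simp
    have pr1: "\<forall>i. a (m + 1 + 2 * i) + a (m + 1 + 2 * i + 1) = 1" using H by simp
    have am: "a m \<le> 1" using digits m by auto
    have alt: "a (m + 2 * i) = a m \<and> a (m + 2 * i + 1) = 1 - a m" for i
    proof (induction i)
      case 0 thus ?case using pr0 by (metis add_0_right add_diff_cancel_left' mult_0_right)
    next
      case (Suc i)
      have "a (m + 2 * i + 1) + a (Suc (m + 2 * i + 1)) = 1" using H by simp
      moreover have "a (m + 2 * Suc i) + a (m + 2 * Suc i + 1) = 1" using pr0 by blast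
      moreover have "Suc (m + 2 * i + 1) = m + 2 * Suc i" by simp
      ultimately show ?case using Suc am by auto
    qed
    have T1: "takagi (yy a (m - 1)) = 2/3" by (rule pairs_T_from[OF D pr0 m])
    have T2: "takagi (yy a m) = 2/3" using pairs_T_from[OF D pr1] by simp
    have DDa: "DD a k (m - 1 + 2 * i) = DD a k (m - 1)" for i using DD_pairs[OF D pr0 m] .
    have DDb: "DD a k (m + 2 * i) = DD a k m" for i using DD_pairs[OF D pr1, of i] by simp
    have DDm: "DD a k m = DD a k (m - 1) + 1 - 2 * int (a m)"
      using DD_step[OF D, of "m - 1"] m by simp
    have infa: "\<forall>N0. \<exists>N\<ge>N0. a (Suc N) = a m \<and> DD a k N = DD a k (m - 1)"
    proof
      fix N0 show "\<exists>N\<ge>N0. a (Suc N) = a m \<and> DD a k N = DD a k (m - 1)"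
        using alt[of N0] DDa[of N0] m by (intro exI[of _ "m - 1 + 2 * N0"]) auto
    qed
    have infb: "\<forall>N0. \<exists>N\<ge>N0. a (Suc N) = 1 - a m \<and> DD a k N = DD a k m"
    proof
      fix N0 show "\<exists>N\<ge>N0. a (Suc N) = 1 - a m \<and> DD a k N = DD a k m"
        using alt[of N0] DDb[of N0] by (intro exI[of _ "m + 2 * N0"]) auto
    qed
    define c where "c = real m - 1 - 2 * (\<Sum>j=1..<m. real (a j))"
    have cD: "c = of_int (DD a k (m - 1))" unfolding c_def using cval m by blast
    show "superdiff takagi x =
           (let c = real m - 1 - 2 * (\<Sum>j=1..<m. real (a j))
            in if a m = 0 then (\<lambda>t. c + t) ` {0..1} else (\<lambda>t. c + t) ` {-1..0})"
    proof (cases "a m = 0")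
      case True
      have DDm': "DD a k m = DD a k (m - 1) + 1" using DDm True by simp
      have "superdiff takagi x = {c..c + 1}"
      proof (intro set_eqI iffI)
        fix \<xi> assume xi: "\<xi> \<in> superdiff takagi x"
        have "c \<le> \<xi>" using ge_from_inf[OF D nd xi] infa True cD by auto
        moreover have "\<xi> \<le> c + 1" using le_from_inf[OF D nd xi, of "DD a k (m - 1) + 1"] infb True cD DDm' by auto
        ultimately show "\<xi> \<in> {c..c+1}" by simp
      next
        fix \<xi> assume "\<xi> \<in> {c..c+1}"
        thus "\<xi> \<in> superdiff takagi x" using memB[OF D nd T1 T2] cD DDm' by auto
      qed
      thus ?thesis using True img_shift[of c 0 1] by (simp add: c_def Let_def)
    next
      case False
      hence a1: "a m = 1" using am by simp
      have DDm': "DD a k m = DD a k (m - 1) - 1" using DDm a1 by simp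
      have "superdiff takagi x = {c - 1..c}"
      proof (intro set_eqI iffI)
        fix \<xi> assume xi: "\<xi> \<in> superdiff takagi x"
        have "c - 1 \<le> \<xi>" using ge_from_inf[OF D nd xi, of "DD a k (m - 1) - 1"] infb a1 cD DDm' by auto
        moreover have "\<xi> \<le> c" using le_from_inf[OF D nd xi] infa a1 cD by auto
        ultimately show "\<xi> \<in> {c - 1..c}" by simp
      next
        fix \<xi> assume "\<xi> \<in> {c - 1..c}"
        thus "\<xi> \<in> superdiff takagi x" using memB[OF D nd T2 T1] cD DDm' by auto
      qed
      thus ?thesis using False img_shift[of c "-1" 0] by (simp add: c_def Let_def)
    qed
  qed
  have P3: "x \<notin> dyadic \<and> \<not> (\<exists>m\<ge>1. \<forall>n\<ge>m. a n + a (Suc n) = 1) \<longrightarrow>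
         (\<forall>m\<ge>1. (\<forall>i. a (m + 2 * i) + a (m + 2 * i + 1) = 1) \<longrightarrow>
            superdiff takagi x = {real m - 1 - 2 * (\<Sum>j=1..<m. real (a j))})"
  proof (intro impI allI)
    fix m :: nat
    assume H: "x \<notin> dyadic \<and> \<not> (\<exists>m\<ge>1. \<forall>n\<ge>m. a n + a (Suc n) = 1)"
      and m: "m \<ge> 1" and pr: "\<forall>i. a (m + 2 * i) + a (m + 2 * i + 1) = 1"
    have nd: "x \<notin> dyadic" and no2: "\<not> (\<exists>m\<ge>1. \<forall>n\<ge>m. a n + a (Suc n) = 1)" using H by auto
    have T1: "takagi (yy a (m - 1)) = 2/3" by (rule pairs_T_from[OF D pr m])
    have DDa: "DD a k (m - 1 + 2 * i) = DD a k (m - 1)" for i using DD_pairs[OF D pr m] .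
    have inf: "\<forall>N0. \<exists>N\<ge>N0. a (Suc N) = b \<and> DD a k N = DD a k (m - 1)" if b: "b = 0 \<or> b = 1" for b
    proof
      fix N0
      obtain i where i: "i \<ge> N0" "a (m + 2 * i) = b" using inf_often[OF D pr m no2 b, of N0] by blast
      show "\<exists>N\<ge>N0. a (Suc N) = b \<and> DD a k N = DD a k (m - 1)"
        using i DDa[of i] m by (intro exI[of _ "m - 1 + 2 * i"]) auto
    qed
    have "superdiff takagi x = {of_int (DD a k (m - 1))}"
    proof (intro set_eqI iffI)
      fix \<xi> assume xi: "\<xi> \<in> superdiff takagi x"
      have "of_int (DD a k (m - 1)) \<le> \<xi>" using ge_from_inf[OF D nd xi] inf[of 0] by auto
      moreover have "\<xi> \<le> of_int (DD a k (m - 1))" using le_from_inf[OF D nd xi] inf[of 1] by auto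
      ultimately show "\<xi> \<in> {of_int (DD a k (m - 1))}" by simp
    next
      fix \<xi> assume "\<xi> \<in> {of_int (DD a k (m - 1)) :: real}"
      thus "\<xi> \<in> superdiff takagi x" using memB[OF D nd T1 T1] by simp
    qed
    thus "superdiff takagi x = {real m - 1 - 2 * (\<Sum>j=1..<m. real (a j))}" using cval[OF m] by simp
  qed
  have P4: "x \<notin> dyadic \<and> \<not> (\<exists>m\<ge>1. \<forall>n\<ge>m. a n + a (Suc n) = 1)
         \<and> \<not> (\<exists>m\<ge>1. \<forall>i. a (m + 2 * i) + a (m + 2 * i + 1) = 1) \<longrightarrow>
         superdiff takagi x = {}"
    using part4_aux[OF D] by blast
  show ?thesis using P1 P2 P3 P4 by blast
qed

end
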